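(* Let $|\Psi\rangle$ be a normalized state of $N$ qubits given by an open MPS in canonical Vidal form $\{\Gamma^{[i]},\Lambda^{[j]}\}$, fix a positive integer $\chi'$, let $|\tilde{\Psi}_{T}\rangle$ be the parallel-compressed MPS and $n=\big\||\tilde{\Psi}_{T}\rangle\big\|$. For $i=1,\dots,N-1$ let $\epsilon_i(\chi')=\sum_{\alpha>\chi'}(\Lambda^{[i]}_{\alpha\alpha})^2$, $\epsilon(\chi')=\sum_{i=1}^{N-1}\epsilon_i(\chi')$, $\nu_i=[1-\epsilon_i(\chi')]^{-1/2}$, and define the stabilized norm $n^*=n\prod_{i=1}^{N-1}\nu_i$. Then $$n^*_{\mathrm{lower}}\le n^*\le n^*_{\mathrm{upper}},\qquad n^*_{\mathrm{lower}}=\Big(1-\sqrt{2\epsilon(\chi')}\Big)\prod_{i=1}^{N-1}\nu_i,\quad n^*_{\mathrm{upper}}=\prod_{i=1}^{N-1}\nu_i,$$ with $n^*_{\mathrm{lower}}\le 1$ and $n^*_{\mathrm{upper}}\ge 1$. Moreover, $n^*_{\mathrm{lower}}$ and $n^*_{\mathrm{upper}}$ converge to $1$ uniformly as $\epsilon(\chi')\to 0$ (i.e., for every $\delta>0$ there is $\eta>0$, independent of $N$ and of the MPS, such that $\epsilon(\chi')<\eta$ implies $|n^*_{\mathrm{lower}}-1|<\delta$ and $|n^*_{\mathrm{upper}}-1|<\delta$).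
   Context: An open MPS in Vidal form on $N$ sites with local dimension $d$ (here $d=2$) consists of tensors $\Gamma^{[i]\sigma_i}$ ($i=1,\dots,N$), each a $\chi_{i-1}\times\chi_i$ matrix for fixed $\sigma_i$, and real diagonal $\chi_i\times\chi_i$ matrices $\Lambda^{[i]}$ ($i=0,\dots,N$) with nonnegative diagonal entries in descending order, $\chi_0=\chi_N=1$, $\Lambda^{[0]}=\Lambda^{[N]}=(1)$, representing $|\Psi\rangle=\sum_{\sigma}\mathrm{Tr}(\Lambda^{[0]}\Gamma^{[1]\sigma_1}\Lambda^{[1]}\cdots\Lambda^{[N-1]}\Gamma^{[N]\sigma_N}\Lambda^{[N]})|\sigma_1\cdots\sigma_N\rangle$. Canonical form means: for every $i$, with $A^{[i]\sigma}=\Lambda^{[i-1]}\Gamma^{[i]\sigma}$ and $B^{[i]\sigma}=\Gamma^{[i]\sigma}\Lambda^{[i]}$, $\sum_\sigma (A^{[i]\sigma})^\dagger A^{[i]\sigma}=I_{\chi_i}$ and $\sum_\sigma B^{[i]\sigma}(B^{[i]\sigma})^\dagger=I_{\chi_{i-1}}$; then $\sum_\alpha(\Lambda^{[i]}_{\alpha\alpha})^2=1$ for each $i$ (so $\epsilon_i(\chi')<1$ when $\chi'\ge1$). $P_i$ is the projector onto the first $\min(\chi',\chi_i)$ standard basis vectors of the bond-$i$ space, and the parallel-compressed state is $|\tilde{\Psi}_{T}\rangle=\sum_{\sigma}\mathrm{Tr}(\Lambda^{[0]}\Gamma^{[1]\sigma_1}P_1\Lambda^{[1]}\Gamma^{[2]\sigma_2}\cdots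 P_{N-1}\Lambda^{[N-1]}\Gamma^{[N]\sigma_N}\Lambda^{[N]})|\sigma_1\cdots\sigma_N\rangle$. Empty sums are zero. *)

theory Defs
  imports "HOL-Analysis.Analysis" "HOL-Library.FuncSet"
begin

text \<open>Open MPS in Vidal form on N qubits (local dimension 2), all indices 0-based:
  Gam i s a b  = entry (a,b) of Gamma^{[i] s}, i = 1..N, s < 2, a < chi (i-1), b < chi i;
  Lam i a      = diagonal entry a of Lambda^{[i]}, i = 0..N, a < chi i;
  chi i        = bond dimension chi_i.
  Entries outside these ranges are never used.\<close>

definition canonical_mps ::
  "nat \<Rightarrow> (nat \<Rightarrow> nat) \<Rightarrow> (nat \<Rightarrow> nat \<Rightarrow> nat \<Rightarrow> nat \<Rightarrow> complex) \<Rightarrow> (nat \<Rightarrow> nat \<Rightarrow> real) \<Rightarrow> bool"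
  where
  "canonical_mps N chi Gam Lam \<longleftrightarrow>
     N \<ge> 1 \<and> chi 0 = 1 \<and> chi N = 1 \<and> (\<forall>i\<le>N. chi i \<ge> 1) \<and>
     Lam 0 0 = 1 \<and> Lam N 0 = 1 \<and>
     (\<forall>i\<le>N. \<forall>a<chi i. Lam i a \<ge> 0) \<and>
     (\<forall>i\<le>N. \<forall>a b. a \<le> b \<longrightarrow> b < chi i \<longrightarrow> Lam i b \<le> Lam i a) \<and>
     (\<forall>i\<in>{1..N}. \<forall>b<chi i. \<forall>c<chi i.
        (\<Sum>s<2. \<Sum>a<chi (i - 1).
            cnj (complex_of_real (Lam (i - 1) a) * Gam i s a b)
              * (complex_of_real (Lam (i - 1) a) * Gam i s a c))
        = (if b = c then 1 else 0)) \<and>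
     (\<forall>i\<in>{1..N}. \<forall>a<chi (i - 1). \<forall>a'<chi (i - 1).
        (\<Sum>s<2. \<Sum>b<chi i.
            (Gam i s a b * complex_of_real (Lam i b))
              * cnj (Gam i s a' b * complex_of_real (Lam i b)))
        = (if a = a' then 1 else 0))"

text \<open>Partial contraction: row vector Lam^{[0]} Gam^{[1] s_1} W^{[1]} ... Gam^{[i] s_i} W^{[i]},
  where W are the (possibly projected) bond weights.\<close>
primrec mps_vec ::
  "(nat \<Rightarrow> nat \<Rightarrow> nat \<Rightarrow> nat \<Rightarrow> complex) \<Rightarrow> (nat \<Rightarrow> nat \<Rightarrow> real) \<Rightarrow> (nat \<Rightarrow> nat)
     \<Rightarrow> (nat \<Rightarrow> nat) \<Rightarrow> nat \<Rightarrow> nat \<Rightarrow> complex" where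
  "mps_vec Gam W chi \<sigma> 0 = (\<lambda>\<beta>. complex_of_real (W 0 \<beta>))"
| "mps_vec Gam W chi \<sigma> (Suc i) =
     (\<lambda>\<beta>. (\<Sum>\<alpha><chi i. mps_vec Gam W chi \<sigma> i \<alpha> * Gam (Suc i) (\<sigma> (Suc i)) \<alpha> \<beta>)
            * complex_of_real (W (Suc i) \<beta>))"

text \<open>Amplitude <sigma_1...sigma_N|Psi> (trace of a 1x1 matrix since chi_0 = chi_N = 1).\<close>
definition mps_amp where
  "mps_amp N chi Gam W \<sigma> = mps_vec Gam W chi \<sigma> N 0"

definition mps_norm ::
  "nat \<Rightarrow> (nat \<Rightarrow> nat) \<Rightarrow> (nat \<Rightarrow> nat \<Rightarrow> nat \<Rightarrow> nat \<Rightarrow> complex) \<Rightarrow> (nat \<Rightarrow> nat \<Rightarrow> real) \<Rightarrow> real"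
  where
  "mps_norm N chi Gam W =
     sqrt (\<Sum>\<sigma>\<in>(PiE {1..N} (\<lambda>_. {..<2::nat})). (cmod (mps_amp N chi Gam W \<sigma>))\<^sup>2)"

text \<open>Bond weights P_i Lambda^{[i]} of the parallel-compressed MPS: keep the first chi' entries
  on the internal bonds 1..N-1.\<close>
definition trunc_weights :: "nat \<Rightarrow> nat \<Rightarrow> (nat \<Rightarrow> nat \<Rightarrow> real) \<Rightarrow> nat \<Rightarrow> nat \<Rightarrow> real" where
  "trunc_weights N chi' Lam = (\<lambda>i \<alpha>. if 0 < i \<and> i < N \<and> chi' \<le> \<alpha> then 0 else Lam i \<alpha>)"

text \<open>epsilon_i(chi') = sum over alpha > chi' (1-based), i.e. 0-based alpha >= chi'.\<close>
definition eps_bond :: "(nat \<Rightarrow> nat) \<Rightarrow> (nat \<Rightarrow> nat \<Rightarrow> real) \<Rightarrow> nat \<Rightarrow> nat \<Rightarrow> real" where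
  "eps_bond chi Lam chi' i = (\<Sum>\<alpha>\<in>{chi'..<chi i}. (Lam i \<alpha>)\<^sup>2)"

definition eps_total :: "nat \<Rightarrow> (nat \<Rightarrow> nat) \<Rightarrow> (nat \<Rightarrow> nat \<Rightarrow> real) \<Rightarrow> nat \<Rightarrow> real" where
  "eps_total N chi Lam chi' = (\<Sum>i\<in>{1..<N}. eps_bond chi Lam chi' i)"

definition nu_prod :: "nat \<Rightarrow> (nat \<Rightarrow> nat) \<Rightarrow> (nat \<Rightarrow> nat \<Rightarrow> real) \<Rightarrow> nat \<Rightarrow> real" where
  "nu_prod N chi Lam chi' = (\<Prod>i\<in>{1..<N}. 1 / sqrt (1 - eps_bond chi Lam chi' i))"

definition stab_norm where
  "stab_norm N chi Gam Lam chi' =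
     mps_norm N chi Gam (trunc_weights N chi' Lam) * nu_prod N chi Lam chi'"

definition n_lower where
  "n_lower N chi Lam chi' = (1 - sqrt (2 * eps_total N chi Lam chi')) * nu_prod N chi Lam chi'"

definition n_upper where
  "n_upper N chi Lam chi' = nu_prod N chi Lam chi'"

end

theory Submission
  imports Defs
begin


definition PS :: "nat \<Rightarrow> (nat \<Rightarrow> nat) set" where
  "PS k = PiE {1..k} (\<lambda>_. {..<2::nat})"

lemma PS_Suc: "PS (Suc k) = (\<lambda>(y, g). g(Suc k := y)) ` ({..<2} \<times> PS k)"
  unfolding PS_def using PiE_insert_eq[of "Suc k" "{1..k}" "\<lambda>_. {..<2::nat}"]
  by (simp add: atLeastAtMostSuc_conv)

lemma sum_PS_Suc:
  "(\<Sum>\<sigma>\<in>PS (Suc k). f \<sigma>) = (\<Sum>\<sigma>\<in>PS k. \<Sum>s<2. f (\<sigma>(Suc k := s)))"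
proof -
  have inj: "inj_on (\<lambda>(y, g). g(Suc k := y)) ({..<2::nat} \<times> PS k)"
    unfolding PS_def by (rule inj_combinator) simp
  have "(\<Sum>\<sigma>\<in>PS (Suc k). f \<sigma>) = (\<Sum>p\<in>{..<2} \<times> PS k. f ((\<lambda>(y, g). g(Suc k := y)) p))"
    unfolding PS_Suc by (rule sum.reindex[OF inj, unfolded comp_def])
  also have "\<dots> = (\<Sum>s<2. \<Sum>\<sigma>\<in>PS k. f (\<sigma>(Suc k := s)))"
    unfolding sum.cartesian_product by (rule sum.cong) auto
  also have "\<dots> = (\<Sum>\<sigma>\<in>PS k. \<Sum>s<2. f (\<sigma>(Suc k := s)))"
    by (rule sum.swap)
  finally show ?thesis .
qed

lemma PS_0: "PS 0 = {\<lambda>_. undefined}"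
  unfolding PS_def by simp

lemma finite_PS: "finite (PS k)"
  unfolding PS_def by (simp add: finite_PiE)

lemma mps_vec_upd: "k < j \<Longrightarrow> mps_vec Gam W chi (\<sigma>(j := s)) k = mps_vec Gam W chi \<sigma> k"
  by (induction k) auto

lemma mps_vec_cong: "(\<And>i. i \<le> k \<Longrightarrow> W i = W' i) \<Longrightarrow> mps_vec Gam W chi \<sigma> k = mps_vec Gam W' chi \<sigma> k"
  by (induction k) auto



lemma quad_expand:
  fixes A :: "'s \<Rightarrow> 'a \<Rightarrow> 'b \<Rightarrow> complex"
  assumes "finite S" "finite T" "finite B"
  shows "(\<Sum>s\<in>S. \<Sum>\<alpha>\<in>T. cnj (\<Sum>b\<in>B. A s \<alpha> b * z b) * (\<Sum>c\<in>B. A s \<alpha> c * z c))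
       = (\<Sum>b\<in>B. \<Sum>c\<in>B. cnj (z b) * z c * (\<Sum>s\<in>S. \<Sum>\<alpha>\<in>T. cnj (A s \<alpha> b) * A s \<alpha> c))"
proof -
  have "(\<Sum>s\<in>S. \<Sum>\<alpha>\<in>T. cnj (\<Sum>b\<in>B. A s \<alpha> b * z b) * (\<Sum>c\<in>B. A s \<alpha> c * z c))
      = (\<Sum>s\<in>S. \<Sum>\<alpha>\<in>T. \<Sum>b\<in>B. \<Sum>c\<in>B. cnj (z b) * z c * (cnj (A s \<alpha> b) * A s \<alpha> c))"
    unfolding cnj_sum sum_product by (simp add: mult_ac)
  also have "\<dots> = (\<Sum>s\<in>S. \<Sum>b\<in>B. \<Sum>c\<in>B. \<Sum>\<alpha>\<in>T. cnj (z b) * z c * (cnj (A s \<alpha> b) * A s \<alpha> c))"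
    by (simp only: sum.swap[where A=T])
  also have "\<dots> = (\<Sum>b\<in>B. \<Sum>c\<in>B. \<Sum>s\<in>S. \<Sum>\<alpha>\<in>T. cnj (z b) * z c * (cnj (A s \<alpha> b) * A s \<alpha> c))"
    by (simp only: sum.swap[where A=S])
  also have "\<dots> = (\<Sum>b\<in>B. \<Sum>c\<in>B. cnj (z b) * z c * (\<Sum>s\<in>S. \<Sum>\<alpha>\<in>T. cnj (A s \<alpha> b) * A s \<alpha> c))"
    by (simp add: sum_distrib_left)
  finally show ?thesis .
qed

lemma sum_delta_diag:
  fixes g :: "'a \<Rightarrow> 'a \<Rightarrow> complex"
  assumes "finite B"
  shows "(\<Sum>b\<in>B. \<Sum>c\<in>B. g b c * (if b = c then 1 else 0)) = (\<Sum>b\<in>B. g b b)"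
  using assms by (simp add: if_distrib cong: if_cong)

lemma can_left:
  assumes "canonical_mps N chi Gam Lam" "1 \<le> i" "i \<le> N" "b < chi i" "c < chi i"
  shows "(\<Sum>s<2. \<Sum>a<chi (i - 1).
            cnj (complex_of_real (Lam (i - 1) a) * Gam i s a b)
              * (complex_of_real (Lam (i - 1) a) * Gam i s a c))
        = (if b = c then 1 else 0)"
  using assms unfolding canonical_mps_def by auto

lemma can_right:
  assumes "canonical_mps N chi Gam Lam" "1 \<le> i" "i \<le> N" "a < chi (i - 1)" "a' < chi (i - 1)"
  shows "(\<Sum>s<2. \<Sum>b<chi i.
            (Gam i s a b * complex_of_real (Lam i b))
              * cnj (Gam i s a' b * complex_of_real (Lam i b)))
        = (if a = a' then 1 else 0)"
  using assms unfolding canonical_mps_def by auto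



lemma cmod_sq_of_real: "complex_of_real ((cmod z)\<^sup>2) = cnj z * z"
  by (metis complex_norm_square mult.commute)

lemma of_real_sq_mult: "complex_of_real (a\<^sup>2 * (cmod z)\<^sup>2) = cnj (complex_of_real a * z) * (complex_of_real a * z)"
proof -
  have "complex_of_real (a\<^sup>2 * (cmod z)\<^sup>2) = complex_of_real (a\<^sup>2) * (cnj z * z)"
    by (simp only: of_real_mult cmod_sq_of_real)
  thus ?thesis by (simp add: power2_eq_square mult_ac)
qed

lemma sq_le_of_abs: "\<bar>a::real\<bar> \<le> b \<Longrightarrow> a\<^sup>2 \<le> b\<^sup>2"
  by (metis abs_ge_zero power2_abs power_mono)

lemma quad:
  assumes can: "canonical_mps N chi Gam Lam"
    and W: "\<forall>i\<le>N. \<forall>b<chi i. \<bar>W i b\<bar> \<le> Lam i b"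
  shows "k \<le> N \<Longrightarrow> (\<Sum>\<sigma>\<in>PS k. (cmod (\<Sum>b<chi k. mps_vec Gam W chi \<sigma> k b * x b))\<^sup>2)
            \<le> (\<Sum>b<chi k. (Lam k b)\<^sup>2 * (cmod (x b))\<^sup>2)"
proof (induction k arbitrary: x)
  case 0
  have c0: "chi 0 = 1" using can unfolding canonical_mps_def by auto
  have "\<bar>W 0 0\<bar> \<le> Lam 0 0" using W c0 by auto
  hence "(W 0 0)\<^sup>2 \<le> (Lam 0 0)\<^sup>2" by (rule sq_le_of_abs)
  hence "(W 0 0)\<^sup>2 * (cmod (x 0))\<^sup>2 \<le> (Lam 0 0)\<^sup>2 * (cmod (x 0))\<^sup>2"
    by (rule mult_right_mono) simp
  thus ?case using c0 by (simp add: PS_0 norm_mult power_mult_distrib)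
next
  case (Suc k)
  have kN: "k \<le> N" using Suc.prems by simp
  define m where "m \<sigma> \<alpha> = mps_vec Gam W chi \<sigma> k \<alpha>" for \<sigma> \<alpha>
  define y where "y s \<alpha> = (\<Sum>b<chi (Suc k). Gam (Suc k) s \<alpha> b * complex_of_real (W (Suc k) b) * x b)" for s \<alpha>
  have e1: "(\<Sum>b<chi (Suc k). mps_vec Gam W chi (\<sigma>(Suc k := s)) (Suc k) b * x b)
          = (\<Sum>\<alpha><chi k. m \<sigma> \<alpha> * y s \<alpha>)" for \<sigma> s
  proof -
    have "(\<Sum>b<chi (Suc k). mps_vec Gam W chi (\<sigma>(Suc k := s)) (Suc k) b * x b)
        = (\<Sum>b<chi (Suc k). \<Sum>\<alpha><chi k. m \<sigma> \<alpha> * (Gam (Suc k) s \<alpha> b * complex_of_real (W (Suc k) b) * x b))"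
      by (simp add: mps_vec_upd m_def sum_distrib_right sum_distrib_left mult_ac)
    also have "\<dots> = (\<Sum>\<alpha><chi k. \<Sum>b<chi (Suc k). m \<sigma> \<alpha> * (Gam (Suc k) s \<alpha> b * complex_of_real (W (Suc k) b) * x b))"
      by (rule sum.swap)
    also have "\<dots> = (\<Sum>\<alpha><chi k. m \<sigma> \<alpha> * y s \<alpha>)"
      by (simp add: y_def sum_distrib_left)
    finally show ?thesis .
  qed
  have "(\<Sum>\<sigma>\<in>PS (Suc k). (cmod (\<Sum>b<chi (Suc k). mps_vec Gam W chi \<sigma> (Suc k) b * x b))\<^sup>2)
      = (\<Sum>\<sigma>\<in>PS k. \<Sum>s<2. (cmod (\<Sum>\<alpha><chi k. m \<sigma> \<alpha> * y s \<alpha>))\<^sup>2)"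
    by (simp only: sum_PS_Suc e1)
  also have "\<dots> = (\<Sum>s<2. \<Sum>\<sigma>\<in>PS k. (cmod (\<Sum>\<alpha><chi k. m \<sigma> \<alpha> * y s \<alpha>))\<^sup>2)"
    by (rule sum.swap)
  also have "\<dots> \<le> (\<Sum>s<2. \<Sum>\<alpha><chi k. (Lam k \<alpha>)\<^sup>2 * (cmod (y s \<alpha>))\<^sup>2)"
    apply (rule sum_mono)
    using Suc.IH[OF kN, of "y _"] unfolding m_def by blast
  also have "\<dots> = (\<Sum>b<chi (Suc k). (W (Suc k) b)\<^sup>2 * (cmod (x b))\<^sup>2)"
  proof -
    define A where "A s \<alpha> b = complex_of_real (Lam k \<alpha>) * Gam (Suc k) s \<alpha> b" for s \<alpha> b
    define z where "z b = complex_of_real (W (Suc k) b) * x b" for b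
    have ly: "complex_of_real (Lam k \<alpha>) * y s \<alpha> = (\<Sum>b<chi (Suc k). A s \<alpha> b * z b)" for s \<alpha>
      by (simp add: y_def A_def z_def sum_distrib_left mult_ac)
    have "complex_of_real (\<Sum>s<2. \<Sum>\<alpha><chi k. (Lam k \<alpha>)\<^sup>2 * (cmod (y s \<alpha>))\<^sup>2)
        = (\<Sum>s<2. \<Sum>\<alpha><chi k. cnj (complex_of_real (Lam k \<alpha>) * y s \<alpha>) * (complex_of_real (Lam k \<alpha>) * y s \<alpha>))"
      by (simp only: of_real_sum of_real_sq_mult)
    also have "\<dots> = (\<Sum>s<2. \<Sum>\<alpha><chi k. cnj (\<Sum>b<chi (Suc k). A s \<alpha> b * z b) * (\<Sum>c<chi (Suc k). A s \<alpha> c * z c))"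
      by (simp only: ly)
    also have "\<dots> = (\<Sum>b<chi (Suc k). \<Sum>c<chi (Suc k). cnj (z b) * z c * (\<Sum>s<2. \<Sum>\<alpha><chi k. cnj (A s \<alpha> b) * A s \<alpha> c))"
      by (rule quad_expand) auto
    also have "\<dots> = (\<Sum>b<chi (Suc k). \<Sum>c<chi (Suc k). cnj (z b) * z c * (if b = c then 1 else 0))"
      apply (intro sum.cong refl)
      using can_left[OF can, of "Suc k"] Suc.prems unfolding A_def by simp
    also have "\<dots> = (\<Sum>b<chi (Suc k). cnj (z b) * z b)"
      by (rule sum_delta_diag) simp
    also have "\<dots> = complex_of_real (\<Sum>b<chi (Suc k). (W (Suc k) b)\<^sup>2 * (cmod (x b))\<^sup>2)"
      by (simp only: of_real_sum of_real_sq_mult z_def)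
    finally show ?thesis by (simp only: of_real_eq_iff)
  qed
  also have "\<dots> \<le> (\<Sum>b<chi (Suc k). (Lam (Suc k) b)\<^sup>2 * (cmod (x b))\<^sup>2)"
  proof (rule sum_mono)
    fix b assume "b \<in> {..<chi (Suc k)}"
    hence "\<bar>W (Suc k) b\<bar> \<le> Lam (Suc k) b" using W Suc.prems by auto
    hence "(W (Suc k) b)\<^sup>2 \<le> (Lam (Suc k) b)\<^sup>2" by (rule sq_le_of_abs)
    thus "(W (Suc k) b)\<^sup>2 * (cmod (x b))\<^sup>2 \<le> (Lam (Suc k) b)\<^sup>2 * (cmod (x b))\<^sup>2"
      by (rule mult_right_mono) simp
  qed
  finally show ?case .
qed



lemma sum_swap3:
  "(\<Sum>b\<in>B. \<Sum>s\<in>S. \<Sum>a\<in>A. f b s a) = (\<Sum>a\<in>A. \<Sum>s\<in>S. \<Sum>b\<in>B. f b s a)"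
proof -
  have "(\<Sum>b\<in>B. \<Sum>s\<in>S. \<Sum>a\<in>A. f b s a) = (\<Sum>b\<in>B. \<Sum>a\<in>A. \<Sum>s\<in>S. f b s a)"
    by (intro sum.cong refl) (rule sum.swap)
  also have "\<dots> = (\<Sum>a\<in>A. \<Sum>b\<in>B. \<Sum>s\<in>S. f b s a)" by (rule sum.swap)
  also have "\<dots> = (\<Sum>a\<in>A. \<Sum>s\<in>S. \<Sum>b\<in>B. f b s a)"
    by (intro sum.cong refl) (rule sum.swap)
  finally show ?thesis .
qed

lemma lam_step:
  assumes can: "canonical_mps N chi Gam Lam" and i: "1 \<le> i" "i \<le> N"
  shows "(\<Sum>b<chi i. (Lam i b)\<^sup>2) = (\<Sum>a<chi (i - 1). (Lam (i - 1) a)\<^sup>2)"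
proof -
  let ?G = "\<lambda>s a b. Gam i s a b"
  have "complex_of_real (\<Sum>b<chi i. (Lam i b)\<^sup>2)
      = (\<Sum>b<chi i. complex_of_real ((Lam i b)\<^sup>2) * (\<Sum>s<2. \<Sum>a<chi (i - 1).
            cnj (complex_of_real (Lam (i - 1) a) * Gam i s a b)
              * (complex_of_real (Lam (i - 1) a) * Gam i s a b)))"
    using can_left[OF can i] by (simp add: of_real_sum)
  also have "\<dots> = (\<Sum>b<chi i. \<Sum>s<2. \<Sum>a<chi (i - 1).
       complex_of_real ((Lam (i - 1) a)\<^sup>2) * ((Gam i s a b * complex_of_real (Lam i b))
              * cnj (Gam i s a b * complex_of_real (Lam i b))))"
    by (simp add: sum_distrib_left power2_eq_square mult_ac)
  also have "\<dots> = (\<Sum>a<chi (i - 1). \<Sum>s<2. \<Sum>b<chi i.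
       complex_of_real ((Lam (i - 1) a)\<^sup>2) * ((Gam i s a b * complex_of_real (Lam i b))
              * cnj (Gam i s a b * complex_of_real (Lam i b))))"
    by (rule sum_swap3)
  also have "\<dots> = (\<Sum>a<chi (i - 1). complex_of_real ((Lam (i - 1) a)\<^sup>2) * (\<Sum>s<2. \<Sum>b<chi i.
       (Gam i s a b * complex_of_real (Lam i b)) * cnj (Gam i s a b * complex_of_real (Lam i b))))"
    by (simp add: sum_distrib_left)
  also have "\<dots> = complex_of_real (\<Sum>a<chi (i - 1). (Lam (i - 1) a)\<^sup>2)"
    using can_right[OF can i] by (simp add: of_real_sum)
  finally show ?thesis by (simp only: of_real_eq_iff)
qed

lemma lam_sum:
  assumes can: "canonical_mps N chi Gam Lam"
  shows "i \<le> N \<Longrightarrow> (\<Sum>b<chi i. (Lam i b)\<^sup>2) = 1"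
proof (induction i)
  case 0
  then show ?case using can unfolding canonical_mps_def by simp
next
  case (Suc i)
  then show ?case using lam_step[OF can, of "Suc i"] by simp
qed

lemma eps_bounds:
  assumes can: "canonical_mps N chi Gam Lam" and i: "i \<le> N" and c1: "1 \<le> chi'"
  shows "0 \<le> eps_bond chi Lam chi' i \<and> eps_bond chi Lam chi' i < 1"
proof -
  have ci: "chi i \<ge> 1" using can i unfolding canonical_mps_def by auto
  have nn: "\<forall>a<chi i. Lam i a \<ge> 0" using can i unfolding canonical_mps_def by auto
  have mono: "\<forall>a b. a \<le> b \<longrightarrow> b < chi i \<longrightarrow> Lam i b \<le> Lam i a"
    using can i unfolding canonical_mps_def by auto
  have s1: "(\<Sum>b<chi i. (Lam i b)\<^sup>2) = 1" using lam_sum[OF can i] .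
  have pos: "Lam i 0 > 0"
  proof (rule ccontr)
    assume "\<not> Lam i 0 > 0"
    hence "\<forall>b<chi i. Lam i b = 0" using nn mono by (metis le0 order.antisym not_less)
    hence "(\<Sum>b<chi i. (Lam i b)\<^sup>2) = 0" by simp
    thus False using s1 by simp
  qed
  have sub: "insert 0 {chi'..<chi i} \<subseteq> {..<chi i}" using ci by auto
  have "(Lam i 0)\<^sup>2 + eps_bond chi Lam chi' i = (\<Sum>b\<in>insert 0 {chi'..<chi i}. (Lam i b)\<^sup>2)"
    unfolding eps_bond_def using c1 by (subst sum.insert) auto
  also have "\<dots> \<le> (\<Sum>b<chi i. (Lam i b)\<^sup>2)"
    by (rule sum_mono2[OF _ sub]) auto
  finally have "(Lam i 0)\<^sup>2 + eps_bond chi Lam chi' i \<le> 1" using s1 by simp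
  moreover have "(Lam i 0)\<^sup>2 > 0" using pos by simp
  moreover have "0 \<le> eps_bond chi Lam chi' i" unfolding eps_bond_def by (rule sum_nonneg) simp
  ultimately show ?thesis by linarith
qed



lemma bil_expand:
  fixes A :: "'s \<Rightarrow> 'a \<Rightarrow> 'b \<Rightarrow> complex"
  shows "(\<Sum>s\<in>S. \<Sum>\<alpha>\<in>T. cnj (\<Sum>b\<in>B. A s \<alpha> b * p b) * (\<Sum>c\<in>B. A s \<alpha> c * q c))
       = (\<Sum>b\<in>B. \<Sum>c\<in>B. cnj (p b) * q c * (\<Sum>s\<in>S. \<Sum>\<alpha>\<in>T. cnj (A s \<alpha> b) * A s \<alpha> c))"
proof -
  have "(\<Sum>s\<in>S. \<Sum>\<alpha>\<in>T. cnj (\<Sum>b\<in>B. A s \<alpha> b * p b) * (\<Sum>c\<in>B. A s \<alpha> c * q c))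
      = (\<Sum>s\<in>S. \<Sum>\<alpha>\<in>T. \<Sum>b\<in>B. \<Sum>c\<in>B. cnj (p b) * q c * (cnj (A s \<alpha> b) * A s \<alpha> c))"
    unfolding cnj_sum sum_product by (simp add: mult_ac)
  also have "\<dots> = (\<Sum>s\<in>S. \<Sum>b\<in>B. \<Sum>c\<in>B. \<Sum>\<alpha>\<in>T. cnj (p b) * q c * (cnj (A s \<alpha> b) * A s \<alpha> c))"
    by (simp only: sum.swap[where A=T])
  also have "\<dots> = (\<Sum>b\<in>B. \<Sum>c\<in>B. \<Sum>s\<in>S. \<Sum>\<alpha>\<in>T. cnj (p b) * q c * (cnj (A s \<alpha> b) * A s \<alpha> c))"
    by (simp only: sum.swap[where A=S])
  also have "\<dots> = (\<Sum>b\<in>B. \<Sum>c\<in>B. cnj (p b) * q c * (\<Sum>s\<in>S. \<Sum>\<alpha>\<in>T. cnj (A s \<alpha> b) * A s \<alpha> c))"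
    by (simp add: sum_distrib_left)
  finally show ?thesis .
qed

lemma mps_vec_last:
  assumes "\<And>i. i < k \<Longrightarrow> W i = W' i" "W k \<beta> = f * W' k \<beta>"
  shows "mps_vec Gam W chi \<sigma> k \<beta> = complex_of_real f * mps_vec Gam W' chi \<sigma> k \<beta>"
proof (cases k)
  case 0
  then show ?thesis using assms by simp
next
  case (Suc j)
  have "mps_vec Gam W chi \<sigma> j = mps_vec Gam W' chi \<sigma> j"
    by (rule mps_vec_cong) (use assms Suc in auto)
  then show ?thesis using assms Suc by simp
qed

lemma quad_single:
  assumes can: "canonical_mps N chi Gam Lam"
    and W: "\<forall>i\<le>N. \<forall>b<chi i. \<bar>W i b\<bar> \<le> Lam i b"
    and k: "k \<le> N" and a: "\<alpha> < chi k"
  shows "(\<Sum>\<sigma>\<in>PS k. (cmod (mps_vec Gam W chi \<sigma> k \<alpha>))\<^sup>2) \<le> (Lam k \<alpha>)\<^sup>2"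
proof -
  have e1: "(\<lambda>b. mps_vec Gam W chi \<sigma> k b * (if b = \<alpha> then 1 else 0)) = (\<lambda>b. if b = \<alpha> then mps_vec Gam W chi \<sigma> k \<alpha> else 0)" for \<sigma>
    by auto
  have e2: "(\<lambda>b. (Lam k b)\<^sup>2 * (cmod (if b = \<alpha> then 1 else 0))\<^sup>2) = (\<lambda>b. if b = \<alpha> then (Lam k \<alpha>)\<^sup>2 else 0)"
    by auto
  show ?thesis
    using quad[OF can W k, of "\<lambda>b. if b = \<alpha> then 1 else 0"] a
    unfolding e1 e2 by simp
qed

lemma tw_W:
  assumes can: "canonical_mps N chi Gam Lam"
  shows "\<forall>i\<le>N. \<forall>b<chi i. \<bar>trunc_weights M chi' Lam i b\<bar> \<le> Lam i b"
  using can unfolding canonical_mps_def trunc_weights_def by auto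

lemma lam_W:
  assumes can: "canonical_mps N chi Gam Lam"
  shows "\<forall>i\<le>N. \<forall>b<chi i. \<bar>Lam i b\<bar> \<le> Lam i b"
  using can unfolding canonical_mps_def by auto

definition ovl where
  "ovl chi Gam Lam chi' k = (\<Sum>\<sigma>\<in>PS k. \<Sum>b<chi k.
      cnj (mps_vec Gam Lam chi \<sigma> k b) * mps_vec Gam (trunc_weights k chi' Lam) chi \<sigma> k b)"

lemma ovl_step:
  assumes can: "canonical_mps N chi Gam Lam" and k: "Suc k \<le> N"
  shows "ovl chi Gam Lam chi' (Suc k) = (\<Sum>\<sigma>\<in>PS k. \<Sum>\<alpha><chi k.
      cnj (mps_vec Gam Lam chi \<sigma> k \<alpha>) *
        (if 0 < k \<and> chi' \<le> \<alpha> then 0 else mps_vec Gam (trunc_weights k chi' Lam) chi \<sigma> k \<alpha>))"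
proof -
  define u where "u \<sigma> \<alpha> = mps_vec Gam Lam chi \<sigma> k \<alpha>" for \<sigma> \<alpha>
  define ut where "ut \<sigma> \<alpha> = mps_vec Gam (trunc_weights (Suc k) chi' Lam) chi \<sigma> k \<alpha>" for \<sigma> \<alpha>
  define A where "A s \<beta> \<alpha> = Gam (Suc k) s \<alpha> \<beta> * complex_of_real (Lam (Suc k) \<beta>)" for s \<beta> \<alpha>
  have twS: "trunc_weights (Suc k) chi' Lam (Suc k) = Lam (Suc k)"
    unfolding trunc_weights_def by auto
  have ut_eq: "ut \<sigma> \<alpha> = (if 0 < k \<and> chi' \<le> \<alpha> then 0 else mps_vec Gam (trunc_weights k chi' Lam) chi \<sigma> k \<alpha>)" for \<sigma> \<alpha>
  proof -
    have "ut \<sigma> \<alpha> = complex_of_real (if 0 < k \<and> chi' \<le> \<alpha> then 0 else 1) * mps_vec Gam (trunc_weights k chi' Lam) chi \<sigma> k \<alpha>"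
      unfolding ut_def
      by (rule mps_vec_last) (auto simp: trunc_weights_def)
    thus ?thesis by simp
  qed
  have inner: "(\<Sum>s<2. \<Sum>\<beta><chi (Suc k). cnj (mps_vec Gam Lam chi (\<sigma>(Suc k := s)) (Suc k) \<beta>) *
        mps_vec Gam (trunc_weights (Suc k) chi' Lam) chi (\<sigma>(Suc k := s)) (Suc k) \<beta>)
      = (\<Sum>\<alpha><chi k. cnj (u \<sigma> \<alpha>) * ut \<sigma> \<alpha>)" for \<sigma>
  proof -
    have "(\<Sum>s<2. \<Sum>\<beta><chi (Suc k). cnj (mps_vec Gam Lam chi (\<sigma>(Suc k := s)) (Suc k) \<beta>) *
        mps_vec Gam (trunc_weights (Suc k) chi' Lam) chi (\<sigma>(Suc k := s)) (Suc k) \<beta>)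
      = (\<Sum>s<2. \<Sum>\<beta><chi (Suc k). cnj (\<Sum>\<alpha><chi k. A s \<beta> \<alpha> * u \<sigma> \<alpha>) * (\<Sum>\<alpha>'<chi k. A s \<beta> \<alpha>' * ut \<sigma> \<alpha>'))"
    proof -
      have e1: "mps_vec Gam Lam chi (\<sigma>(Suc k := s)) (Suc k) \<beta> = (\<Sum>\<alpha><chi k. A s \<beta> \<alpha> * u \<sigma> \<alpha>)" for s \<beta>
        by (simp add: mps_vec_upd u_def A_def sum_distrib_right sum_distrib_left mult_ac)
      have e2: "mps_vec Gam (trunc_weights (Suc k) chi' Lam) chi (\<sigma>(Suc k := s)) (Suc k) \<beta> = (\<Sum>\<alpha><chi k. A s \<beta> \<alpha> * ut \<sigma> \<alpha>)" for s \<beta>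
        by (simp add: mps_vec_upd twS ut_def A_def sum_distrib_right sum_distrib_left mult_ac)
      show ?thesis by (simp only: e1 e2)
    qed
    also have "\<dots> = (\<Sum>\<alpha><chi k. \<Sum>\<alpha>'<chi k. cnj (u \<sigma> \<alpha>) * ut \<sigma> \<alpha>' *
        (\<Sum>s<2. \<Sum>\<beta><chi (Suc k). cnj (A s \<beta> \<alpha>) * A s \<beta> \<alpha>'))"
      by (rule bil_expand)
    also have "\<dots> = (\<Sum>\<alpha><chi k. \<Sum>\<alpha>'<chi k. cnj (u \<sigma> \<alpha>) * ut \<sigma> \<alpha>' * (if \<alpha> = \<alpha>' then 1 else 0))"
    proof (intro sum.cong refl)
      fix \<alpha> \<alpha>' assume a: "\<alpha> \<in> {..<chi k}" "\<alpha>' \<in> {..<chi k}"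
      have "(\<Sum>s<2. \<Sum>\<beta><chi (Suc k). cnj (A s \<beta> \<alpha>) * A s \<beta> \<alpha>')
          = (\<Sum>s<2. \<Sum>\<beta><chi (Suc k). (Gam (Suc k) s \<alpha>' \<beta> * complex_of_real (Lam (Suc k) \<beta>))
              * cnj (Gam (Suc k) s \<alpha> \<beta> * complex_of_real (Lam (Suc k) \<beta>)))"
        unfolding A_def by (simp add: mult.commute)
      also have "\<dots> = (if \<alpha>' = \<alpha> then 1 else 0)"
        using can_right[OF can, of "Suc k" \<alpha>' \<alpha>] a k by simp
      finally show "cnj (u \<sigma> \<alpha>) * ut \<sigma> \<alpha>' * (\<Sum>s<2. \<Sum>\<beta><chi (Suc k). cnj (A s \<beta> \<alpha>) * A s \<beta> \<alpha>')
          = cnj (u \<sigma> \<alpha>) * ut \<sigma> \<alpha>' * (if \<alpha> = \<alpha>' then 1 else 0)" by auto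
    qed
    also have "\<dots> = (\<Sum>\<alpha><chi k. cnj (u \<sigma> \<alpha>) * ut \<sigma> \<alpha>)"
      by (rule sum_delta_diag) simp
    finally show ?thesis .
  qed
  have "ovl chi Gam Lam chi' (Suc k) = (\<Sum>\<sigma>\<in>PS k. \<Sum>\<alpha><chi k. cnj (u \<sigma> \<alpha>) * ut \<sigma> \<alpha>)"
    unfolding ovl_def sum_PS_Suc inner ..
  then show ?thesis by (simp add: ut_eq u_def)
qed



lemma ovl_0:
  assumes can: "canonical_mps N chi Gam Lam"
  shows "ovl chi Gam Lam chi' 0 = 1"
  using can unfolding canonical_mps_def ovl_def
  by (simp add: PS_0 trunc_weights_def)

lemma cross_bound:
  assumes can: "canonical_mps N chi Gam Lam" and k: "k \<le> N" and a: "\<alpha> < chi k"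
  shows "(\<Sum>\<sigma>\<in>PS k. cmod (cnj (mps_vec Gam Lam chi \<sigma> k \<alpha>) * mps_vec Gam (trunc_weights k chi' Lam) chi \<sigma> k \<alpha>))
         \<le> (Lam k \<alpha>)\<^sup>2"
proof -
  let ?u = "\<lambda>\<sigma>. mps_vec Gam Lam chi \<sigma> k \<alpha>"
  let ?v = "\<lambda>\<sigma>. mps_vec Gam (trunc_weights k chi' Lam) chi \<sigma> k \<alpha>"
  have "(\<Sum>\<sigma>\<in>PS k. cmod (cnj (?u \<sigma>) * ?v \<sigma>)) \<le> (\<Sum>\<sigma>\<in>PS k. ((cmod (?u \<sigma>))\<^sup>2 + (cmod (?v \<sigma>))\<^sup>2) / 2)"
  proof (rule sum_mono)
    fix \<sigma>
    have "0 \<le> (cmod (?u \<sigma>) - cmod (?v \<sigma>))\<^sup>2" by simp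
    thus "cmod (cnj (?u \<sigma>) * ?v \<sigma>) \<le> ((cmod (?u \<sigma>))\<^sup>2 + (cmod (?v \<sigma>))\<^sup>2) / 2"
      by (simp add: norm_mult power2_eq_square algebra_simps)
  qed
  also have "\<dots> = ((\<Sum>\<sigma>\<in>PS k. (cmod (?u \<sigma>))\<^sup>2) + (\<Sum>\<sigma>\<in>PS k. (cmod (?v \<sigma>))\<^sup>2)) / 2"
    unfolding sum_divide_distrib[symmetric] sum.distrib ..
  also have "\<dots> \<le> ((Lam k \<alpha>)\<^sup>2 + (Lam k \<alpha>)\<^sup>2) / 2"
    using quad_single[OF can lam_W[OF can] k a] quad_single[OF can tw_W[OF can, of k chi'] k a] by simp
  finally show ?thesis by simp
qed

lemma ovl_bound:
  assumes can: "canonical_mps N chi Gam Lam"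
  shows "k \<le> N \<Longrightarrow> Re (ovl chi Gam Lam chi' k) \<ge> 1 - (\<Sum>i\<in>{1..<k}. eps_bond chi Lam chi' i)"
proof (induction k)
  case 0
  then show ?case using ovl_0[OF can] by simp
next
  case (Suc k)
  have kN: "k \<le> N" using Suc.prems by simp
  let ?u = "\<lambda>\<sigma> \<alpha>. mps_vec Gam Lam chi \<sigma> k \<alpha>"
  let ?v = "\<lambda>\<sigma> \<alpha>. mps_vec Gam (trunc_weights k chi' Lam) chi \<sigma> k \<alpha>"
  let ?P = "\<lambda>\<alpha>. 0 < k \<and> chi' \<le> \<alpha>"
  define d where "d = (\<Sum>\<sigma>\<in>PS k. \<Sum>\<alpha><chi k. if ?P \<alpha> then cnj (?u \<sigma> \<alpha>) * ?v \<sigma> \<alpha> else 0)"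
  have "ovl chi Gam Lam chi' (Suc k) = (\<Sum>\<sigma>\<in>PS k. \<Sum>\<alpha><chi k.
      cnj (?u \<sigma> \<alpha>) * ?v \<sigma> \<alpha> - (if ?P \<alpha> then cnj (?u \<sigma> \<alpha>) * ?v \<sigma> \<alpha> else 0))"
    unfolding ovl_step[OF can Suc.prems] by (intro sum.cong refl) auto
  also have "\<dots> = ovl chi Gam Lam chi' k - d"
    unfolding ovl_def d_def by (simp add: sum_subtractf)
  finally have ov: "ovl chi Gam Lam chi' (Suc k) = ovl chi Gam Lam chi' k - d" .
  have "cmod d \<le> (\<Sum>\<sigma>\<in>PS k. \<Sum>\<alpha><chi k. cmod (if ?P \<alpha> then cnj (?u \<sigma> \<alpha>) * ?v \<sigma> \<alpha> else 0))"
    unfolding d_def by (rule order.trans[OF norm_sum sum_mono[OF norm_sum]])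
  also have "\<dots> = (\<Sum>\<alpha><chi k. \<Sum>\<sigma>\<in>PS k. cmod (if ?P \<alpha> then cnj (?u \<sigma> \<alpha>) * ?v \<sigma> \<alpha> else 0))"
    by (rule sum.swap)
  also have "\<dots> \<le> (\<Sum>\<alpha><chi k. if ?P \<alpha> then (Lam k \<alpha>)\<^sup>2 else 0)"
  proof (rule sum_mono)
    fix \<alpha> assume a: "\<alpha> \<in> {..<chi k}"
    show "(\<Sum>\<sigma>\<in>PS k. cmod (if ?P \<alpha> then cnj (?u \<sigma> \<alpha>) * ?v \<sigma> \<alpha> else 0)) \<le> (if ?P \<alpha> then (Lam k \<alpha>)\<^sup>2 else 0)"
      using cross_bound[OF can kN, of \<alpha> chi'] a by auto
  qed
  also have "\<dots> = (if 0 < k then eps_bond chi Lam chi' k else 0)"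
  proof (cases "0 < k")
    case True
    have "(\<Sum>\<alpha><chi k. if ?P \<alpha> then (Lam k \<alpha>)\<^sup>2 else 0) = (\<Sum>\<alpha>\<in>{\<alpha>\<in>{..<chi k}. chi' \<le> \<alpha>}. (Lam k \<alpha>)\<^sup>2)"
      using True sum.inter_filter[of "{..<chi k}" "\<lambda>\<alpha>. (Lam k \<alpha>)\<^sup>2" "\<lambda>\<alpha>. chi' \<le> \<alpha>"] by simp
    also have "{\<alpha>\<in>{..<chi k}. chi' \<le> \<alpha>} = {chi'..<chi k}" by auto
    finally show ?thesis using True unfolding eps_bond_def by simp
  qed simp
  finally have dle: "cmod d \<le> (if 0 < k then eps_bond chi Lam chi' k else 0)" .
  have sumS: "(\<Sum>i\<in>{1..<Suc k}. eps_bond chi Lam chi' i) = (\<Sum>i\<in>{1..<k}. eps_bond chi Lam chi' i) + (if 0 < k then eps_bond chi Lam chi' k else 0)"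
    by (cases k) (auto simp: sum.atLeastLessThan_Suc)
  have "Re d \<le> cmod d" by (rule complex_Re_le_cmod)
  then show ?case using Suc.IH[OF kN] ov dle sumS by simp
qed



lemma prod_inv_sqrt:
  fixes e :: "nat \<Rightarrow> real"
  shows "finite A \<Longrightarrow> (\<Prod>i\<in>A. 1 / sqrt (1 - e i)) = 1 / sqrt (\<Prod>i\<in>A. (1 - e i))"
  by (induction A rule: finite_induct) (auto simp: real_sqrt_mult)

lemma weierstrass:
  fixes e :: "nat \<Rightarrow> real"
  shows "finite A \<Longrightarrow> (\<And>i. i \<in> A \<Longrightarrow> 0 \<le> e i \<and> e i \<le> 1) \<Longrightarrow>
     (\<Prod>i\<in>A. (1 - e i)) \<ge> 1 - (\<Sum>i\<in>A. e i)"
proof (induction A rule: finite_induct)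
  case empty
  then show ?case by simp
next
  case (insert a A)
  have ea: "0 \<le> e a" "e a \<le> 1" using insert.prems by auto
  have IH: "(\<Prod>i\<in>A. (1 - e i)) \<ge> 1 - (\<Sum>i\<in>A. e i)" using insert by auto
  have S: "(\<Sum>i\<in>A. e i) \<ge> 0" using insert.prems by (intro sum_nonneg) auto
  have "(1 - e a) * (\<Prod>i\<in>A. (1 - e i)) \<ge> (1 - e a) * (1 - (\<Sum>i\<in>A. e i))"
    using IH ea by (intro mult_left_mono) auto
  moreover have "(1 - e a) * (1 - (\<Sum>i\<in>A. e i)) \<ge> 1 - (e a + (\<Sum>i\<in>A. e i))"
    using ea S by (simp add: algebra_simps)
  ultimately show ?case using insert by simp
qed

lemma amp_norm:
  assumes can: "canonical_mps N chi Gam Lam"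
  shows "mps_norm N chi Gam (trunc_weights N chi' Lam) \<le> 1"
proof -
  have cN: "chi N = 1" using can unfolding canonical_mps_def by auto
  have "(\<Sum>\<sigma>\<in>PS N. (cmod (mps_vec Gam (trunc_weights N chi' Lam) chi \<sigma> N 0))\<^sup>2) \<le> (Lam N 0)\<^sup>2"
    using quad_single[OF can tw_W[OF can, of N chi'], of N 0] cN by simp
  also have "\<dots> = 1" using can unfolding canonical_mps_def by simp
  finally show ?thesis unfolding mps_norm_def mps_amp_def PS_def[symmetric] by simp
qed

lemma amp_lower:
  assumes can: "canonical_mps N chi Gam Lam" and n1: "mps_norm N chi Gam Lam = 1"
  shows "mps_norm N chi Gam (trunc_weights N chi' Lam) \<ge> 1 - eps_total N chi Lam chi'"
proof -
  have cN: "chi N = 1" using can unfolding canonical_mps_def by auto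
  let ?a = "\<lambda>\<sigma>. mps_vec Gam Lam chi \<sigma> N 0"
  let ?b = "\<lambda>\<sigma>. mps_vec Gam (trunc_weights N chi' Lam) chi \<sigma> N 0"
  have ov: "ovl chi Gam Lam chi' N = (\<Sum>\<sigma>\<in>PS N. cnj (?a \<sigma>) * ?b \<sigma>)"
    unfolding ovl_def using cN by simp
  have "1 - eps_total N chi Lam chi' \<le> Re (ovl chi Gam Lam chi' N)"
    using ovl_bound[OF can, of N chi'] unfolding eps_total_def by simp
  also have "\<dots> \<le> cmod (ovl chi Gam Lam chi' N)" by (rule complex_Re_le_cmod)
  also have "\<dots> \<le> (\<Sum>\<sigma>\<in>PS N. \<bar>cmod (?a \<sigma>)\<bar> * \<bar>cmod (?b \<sigma>)\<bar>)"
    unfolding ov by (rule order.trans[OF norm_sum]) (simp add: norm_mult)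
  also have "\<dots> \<le> L2_set (\<lambda>\<sigma>. cmod (?a \<sigma>)) (PS N) * L2_set (\<lambda>\<sigma>. cmod (?b \<sigma>)) (PS N)"
    by (rule L2_set_mult_ineq)
  also have "\<dots> = mps_norm N chi Gam Lam * mps_norm N chi Gam (trunc_weights N chi' Lam)"
    unfolding L2_set_def mps_norm_def mps_amp_def PS_def ..
  finally show ?thesis using n1 by simp
qed



lemma facts:
  assumes can: "canonical_mps N chi Gam Lam" and n1: "mps_norm N chi Gam Lam = 1" and c1: "1 \<le> chi'"
  shows "0 \<le> eps_total N chi Lam chi'" "1 \<le> nu_prod N chi Lam chi'"
    "eps_total N chi Lam chi' < 1 \<Longrightarrow> nu_prod N chi Lam chi' \<le> 1 / sqrt (1 - eps_total N chi Lam chi')"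
    "0 \<le> mps_norm N chi Gam (trunc_weights N chi' Lam)"
    "mps_norm N chi Gam (trunc_weights N chi' Lam) \<le> 1"
    "1 - eps_total N chi Lam chi' \<le> mps_norm N chi Gam (trunc_weights N chi' Lam)"
proof -
  have eb: "\<And>i. i \<in> {1..<N} \<Longrightarrow> 0 \<le> eps_bond chi Lam chi' i \<and> eps_bond chi Lam chi' i < 1"
    using eps_bounds[OF can _ c1] by simp
  show "0 \<le> eps_total N chi Lam chi'" unfolding eps_total_def
    using eb by (intro sum_nonneg) auto
  show "1 \<le> nu_prod N chi Lam chi'" unfolding nu_prod_def
  proof (rule prod_ge_1)
    fix i assume "i \<in> {1..<N}"
    hence "0 \<le> eps_bond chi Lam chi' i" "eps_bond chi Lam chi' i < 1" using eb by auto
    hence "sqrt (1 - eps_bond chi Lam chi' i) \<le> 1" "0 < sqrt (1 - eps_bond chi Lam chi' i)" by auto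
    thus "1 \<le> 1 / sqrt (1 - eps_bond chi Lam chi' i)" by (simp add: field_simps)
  qed
  show "nu_prod N chi Lam chi' \<le> 1 / sqrt (1 - eps_total N chi Lam chi')" if E: "eps_total N chi Lam chi' < 1"
  proof -
    have w: "(\<Prod>i\<in>{1..<N}. (1 - eps_bond chi Lam chi' i)) \<ge> 1 - eps_total N chi Lam chi'"
      unfolding eps_total_def using eb by (intro weierstrass) (auto simp: less_imp_le)
    have "nu_prod N chi Lam chi' = 1 / sqrt (\<Prod>i\<in>{1..<N}. (1 - eps_bond chi Lam chi' i))"
      unfolding nu_prod_def by (rule prod_inv_sqrt) simp
    also have "\<dots> \<le> 1 / sqrt (1 - eps_total N chi Lam chi')"
      using w E by (intro divide_left_mono) auto
    finally show ?thesis .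
  qed
  show "0 \<le> mps_norm N chi Gam (trunc_weights N chi' Lam)" unfolding mps_norm_def
    by (intro real_sqrt_ge_zero sum_nonneg) auto
  show "mps_norm N chi Gam (trunc_weights N chi' Lam) \<le> 1" by (rule amp_norm[OF can])
  show "1 - eps_total N chi Lam chi' \<le> mps_norm N chi Gam (trunc_weights N chi' Lam)"
    by (rule amp_lower[OF can n1])
qed

lemma real1:
  fixes E \<nu> n :: real
  assumes "0 \<le> E" "1 \<le> \<nu>" "E < 1 \<Longrightarrow> \<nu> \<le> 1 / sqrt (1 - E)" "0 \<le> n" "n \<le> 1" "1 - E \<le> n"
  shows "(1 - sqrt (2 * E)) * \<nu> \<le> n * \<nu>" "n * \<nu> \<le> \<nu>" "(1 - sqrt (2 * E)) * \<nu> \<le> 1"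
proof -
  have lo: "1 - sqrt (2 * E) \<le> n"
  proof (cases "E \<le> 2")
    case True
    have "E\<^sup>2 \<le> 2 * E" using True assms(1) by (simp add: power2_eq_square mult_right_mono)
    hence "E \<le> sqrt (2 * E)" using assms(1) by (simp add: real_le_rsqrt)
    then show ?thesis using assms(6) by linarith
  next
    case False
    hence "1 \<le> sqrt (2 * E)" by (simp add: real_le_rsqrt)
    then show ?thesis using assms(4) by linarith
  qed
  show "(1 - sqrt (2 * E)) * \<nu> \<le> n * \<nu>" using lo assms(2) by (intro mult_right_mono) auto
  show "n * \<nu> \<le> \<nu>" using assms(2,5) by (simp add: mult_left_le_one_le)
  show "(1 - sqrt (2 * E)) * \<nu> \<le> 1"
  proof (cases "sqrt (2 * E) \<le> 1")
    case False
    hence "(1 - sqrt (2 * E)) * \<nu> \<le> 0" using assms(2) by (intro mult_nonpos_nonneg) auto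
    then show ?thesis by simp
  next
    case True
    define t where "t = sqrt (2 * E)"
    have t0: "0 \<le> t" "t \<le> 1" using True assms(1) by (auto simp: t_def)
    have Et: "E = t\<^sup>2 / 2" using assms(1) by (simp add: t_def)
    have tt: "t * t \<le> t" using t0 by (intro mult_left_le) auto
    have E1: "E < 1" using Et tt t0 by (simp add: power2_eq_square)
    have "(1 - t)\<^sup>2 \<le> 1 - E" using Et tt t0 by (simp add: power2_eq_square algebra_simps)
    hence s: "1 - t \<le> sqrt (1 - E)" by (rule real_le_rsqrt)
    have sp: "0 < sqrt (1 - E)" using E1 by simp
    have "(1 - t) * \<nu> \<le> (1 - t) * (1 / sqrt (1 - E))"
      using assms(3)[OF E1] t0 by (intro mult_left_mono) auto
    also have "\<dots> \<le> 1" using s sp by (simp add: field_simps)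
    finally show ?thesis by (simp add: t_def)
  qed
qed

lemma real2:
  fixes \<delta> :: real
  assumes d: "\<delta> > 0"
  shows "\<exists>\<eta>>0. \<forall>E \<nu>. 0 \<le> E \<and> 1 \<le> \<nu> \<and> (E < 1 \<longrightarrow> \<nu> \<le> 1 / sqrt (1 - E)) \<and> (1 - sqrt (2 * E)) * \<nu> \<le> 1 \<and> E < \<eta>
     \<longrightarrow> \<bar>(1 - sqrt (2 * E)) * \<nu> - 1\<bar> < \<delta> \<and> \<bar>\<nu> - 1\<bar> < \<delta>"
proof -
  define \<eta> where "\<eta> = min (1/2) (min (\<delta>\<^sup>2 / 2) (1 - 1 / (1 + \<delta>)\<^sup>2))"
  have "(1 + \<delta>)\<^sup>2 = 1 + \<delta> * (2 + \<delta>)" by (simp add: power2_eq_square algebra_simps)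
  moreover have "\<delta> * (2 + \<delta>) > 0" using d by simp
  ultimately have "(1 + \<delta>)\<^sup>2 > 1" by simp
  hence q: "1 / (1 + \<delta>)\<^sup>2 < 1" by (simp add: divide_less_eq)
  have "\<eta> > 0" unfolding \<eta>_def using d q by auto
  moreover have "\<bar>(1 - sqrt (2 * E)) * \<nu> - 1\<bar> < \<delta> \<and> \<bar>\<nu> - 1\<bar> < \<delta>"
    if h: "0 \<le> E" "1 \<le> \<nu>" "E < 1 \<longrightarrow> \<nu> \<le> 1 / sqrt (1 - E)" "(1 - sqrt (2 * E)) * \<nu> \<le> 1" "E < \<eta>" for E \<nu>
  proof -
    have E2: "E < 1/2" "E < \<delta>\<^sup>2 / 2" "E < 1 - 1 / (1 + \<delta>)\<^sup>2" using h(5) unfolding \<eta>_def by auto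
    have nu: "\<nu> \<le> 1 / sqrt (1 - E)" using h(3) E2 by simp
    have "1 / (1 + \<delta>)\<^sup>2 < 1 - E" using E2 by simp
    hence "sqrt (1 / (1 + \<delta>)\<^sup>2) < sqrt (1 - E)" by (rule real_sqrt_less_mono)
    hence "1 / (1 + \<delta>) < sqrt (1 - E)" using d by (simp add: real_sqrt_divide)
    hence "1 / sqrt (1 - E) < 1 + \<delta>" using d E2
      by (smt (verit) divide_less_cancel divide_pos_pos nonzero_mult_div_cancel_left real_sqrt_gt_zero times_divide_eq_right divide_divide_eq_right frac_less2)
    hence up: "\<bar>\<nu> - 1\<bar> < \<delta>" using nu h(2) by linarith
    have "sqrt (2 * E) < sqrt (\<delta>\<^sup>2)" using E2 by (intro real_sqrt_less_mono) simp
    hence t: "sqrt (2 * E) < \<delta>" using d by simp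
    have s1: "sqrt (2 * E) \<le> 1" using E2 h(1) by (simp add: real_sqrt_le_1_iff)
    have "(1 - sqrt (2 * E)) * 1 \<le> (1 - sqrt (2 * E)) * \<nu>" using s1 h(2) by (intro mult_left_mono) auto
    hence "1 - sqrt (2 * E) \<le> (1 - sqrt (2 * E)) * \<nu>" by simp
    hence "\<bar>(1 - sqrt (2 * E)) * \<nu> - 1\<bar> < \<delta>" using h(4) t unfolding abs_less_iff by linarith
    with up show ?thesis by simp
  qed
  ultimately show ?thesis by blast
qed


theorem theorem3:
  shows "(\<forall>N chi Gam Lam (chi'::nat).
            canonical_mps N chi Gam Lam \<and> mps_norm N chi Gam Lam = 1 \<and> chi' \<ge> 1 \<longrightarrow>
              n_lower N chi Lam chi' \<le> stab_norm N chi Gam Lam chi' \<and>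
              stab_norm N chi Gam Lam chi' \<le> n_upper N chi Lam chi' \<and>
              n_lower N chi Lam chi' \<le> 1 \<and> n_upper N chi Lam chi' \<ge> 1)
       \<and> (\<forall>\<delta>::real. \<delta> > 0 \<longrightarrow> (\<exists>\<eta>::real. \<eta> > 0 \<and>
            (\<forall>N chi Gam Lam (chi'::nat).
               canonical_mps N chi Gam Lam \<and> mps_norm N chi Gam Lam = 1 \<and> chi' \<ge> 1
               \<and> eps_total N chi Lam chi' < \<eta> \<longrightarrow>
                 \<bar>n_lower N chi Lam chi' - 1\<bar> < \<delta> \<and> \<bar>n_upper N chi Lam chi' - 1\<bar> < \<delta>)))"
proof (rule conjI)
  show "\<forall>N chi Gam Lam (chi'::nat).
            canonical_mps N chi Gam Lam \<and> mps_norm N chi Gam Lam = 1 \<and> chi' \<ge> 1 \<longrightarrow>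
              n_lower N chi Lam chi' \<le> stab_norm N chi Gam Lam chi' \<and>
              stab_norm N chi Gam Lam chi' \<le> n_upper N chi Lam chi' \<and>
              n_lower N chi Lam chi' \<le> 1 \<and> n_upper N chi Lam chi' \<ge> 1"
  proof (intro allI impI)
    fix N chi Gam Lam and chi' :: nat
    assume h: "canonical_mps N chi Gam Lam \<and> mps_norm N chi Gam Lam = 1 \<and> chi' \<ge> 1"
    note F = facts[OF h[THEN conjunct1] h[THEN conjunct2, THEN conjunct1] h[THEN conjunct2, THEN conjunct2]]
    note R = real1[OF F]
    show "n_lower N chi Lam chi' \<le> stab_norm N chi Gam Lam chi' \<and>
              stab_norm N chi Gam Lam chi' \<le> n_upper N chi Lam chi' \<and>
              n_lower N chi Lam chi' \<le> 1 \<and> n_upper N chi Lam chi' \<ge> 1"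
      unfolding n_lower_def stab_norm_def n_upper_def using R F(2) by (simp add: mult.commute)
  qed
next
  show "\<forall>\<delta>::real. \<delta> > 0 \<longrightarrow> (\<exists>\<eta>::real. \<eta> > 0 \<and>
            (\<forall>N chi Gam Lam (chi'::nat).
               canonical_mps N chi Gam Lam \<and> mps_norm N chi Gam Lam = 1 \<and> chi' \<ge> 1
               \<and> eps_total N chi Lam chi' < \<eta> \<longrightarrow>
                 \<bar>n_lower N chi Lam chi' - 1\<bar> < \<delta> \<and> \<bar>n_upper N chi Lam chi' - 1\<bar> < \<delta>))"
  proof (intro allI impI)
    fix \<delta> :: real assume d: "\<delta> > 0"
    obtain \<eta> where eta: "\<eta> > 0" and H: "\<And>E \<nu>. 0 \<le> E \<and> 1 \<le> \<nu> \<and> (E < 1 \<longrightarrow> \<nu> \<le> 1 / sqrt (1 - E)) \<and> (1 - sqrt (2 * E)) * \<nu> \<le> 1 \<and> E < \<eta>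
     \<Longrightarrow> \<bar>(1 - sqrt (2 * E)) * \<nu> - 1\<bar> < \<delta> \<and> \<bar>\<nu> - 1\<bar> < \<delta>"
      using real2[OF d] by blast
    show "\<exists>\<eta>::real. \<eta> > 0 \<and>
            (\<forall>N chi Gam Lam (chi'::nat).
               canonical_mps N chi Gam Lam \<and> mps_norm N chi Gam Lam = 1 \<and> chi' \<ge> 1
               \<and> eps_total N chi Lam chi' < \<eta> \<longrightarrow>
                 \<bar>n_lower N chi Lam chi' - 1\<bar> < \<delta> \<and> \<bar>n_upper N chi Lam chi' - 1\<bar> < \<delta>)"
    proof (rule exI[of _ \<eta>], rule conjI[OF eta], intro allI impI)
      fix N chi Gam Lam and chi' :: nat
      assume h: "canonical_mps N chi Gam Lam \<and> mps_norm N chi Gam Lam = 1 \<and> chi' \<ge> 1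
               \<and> eps_total N chi Lam chi' < \<eta>"
      note F = facts[OF h[THEN conjunct1] h[THEN conjunct2, THEN conjunct1] h[THEN conjunct2, THEN conjunct2, THEN conjunct1]]
      note R = real1[OF F]
      have "\<bar>(1 - sqrt (2 * eps_total N chi Lam chi')) * nu_prod N chi Lam chi' - 1\<bar> < \<delta> \<and> \<bar>nu_prod N chi Lam chi' - 1\<bar> < \<delta>"
        using H F R(3) h by blast
      then show "\<bar>n_lower N chi Lam chi' - 1\<bar> < \<delta> \<and> \<bar>n_upper N chi Lam chi' - 1\<bar> < \<delta>"
        unfolding n_lower_def n_upper_def .
    qed
  qed
qed

end
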